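(* Let $(A,\cdot,[\,,\,],\varepsilon)$ be an $F$-manifold color algebra, let $V$ be a $G$-graded vector space, let $\rho:A\to\mathfrak{gl}(V)$ be a representation of the Lie color algebra $(A,[\,,\,],\varepsilon)$ and let $\mu:A\to\mathfrak{gl}(V)$ be a representation of the $\varepsilon$-commutative associative algebra $(A,\cdot,\varepsilon)$ such that for all homogeneous $x,y,z\in A$: $$R_{\rho,\mu}(x\cdot y,z)=\varepsilon(x,y+z)R_{\rho,\mu}(y,z)\mu(x)+\varepsilon(y,z)R_{\rho,\mu}(x,z)\mu(y),$$ $$\mu(P_x(y,z))=-\varepsilon(x,y+z)T_{\rho,\mu}(y,z)\mu(x)+\mu(x)T_{\rho,\mu}(y,z),$$ where $R_{\rho,\mu}(x,y)=\rho(x)\mu(y)-\varepsilon(x,y)\mu(y)\rho(x)-\mu([x,y])$ and $T_{\rho,\mu}(x,y)=-\varepsilon(x,y)\rho(y)\mu(x)-\rho(x)\mu(y)+\rho(x\cdot y)$. Then $(V^*,\rho^*,-\mu^* )$ is a representation of the $F$-manifold color algebra $A$.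
   Context: $G$ is an abelian group and $\varepsilon:G\times G\to\mathbb K\setminus\{0\}$ is a skew-symmetric bicharacter: $\varepsilon(a,b)\varepsilon(b,a)=1$, $\varepsilon(a,b+c)=\varepsilon(a,b)\varepsilon(a,c)$, $\varepsilon(a+b,c)=\varepsilon(a,c)\varepsilon(b,c)$; $\mathbb K$ is algebraically closed of characteristic zero, spaces finite-dimensional. For homogeneous $x\in A_a,y\in A_b$, $\varepsilon(x,y)$ means $\varepsilon(a,b)$, $\varepsilon(x,y+z)$ means $\varepsilon(a,b+c)$, etc. An $\varepsilon$-commutative associative algebra is a $G$-graded associative algebra $(A,\cdot)$ with $A_aA_b\subseteq A_{a+b}$ and $x\cdot y=\varepsilon(x,y)y\cdot x$. A Lie color algebra is a $G$-graded space with bilinear $[\,,\,]$, $[A_a,A_b]\subseteq A_{a+b}$, $[x,y]=-\varepsilon(x,y)[y,x]$, and $\varepsilon(z,x)[x,[y,z]]+\varepsilon(y,z)[z,[x,y]]+\varepsilon(x,y)[y,[z,x]]=0$. An $F$-manifold color algebra is $(A,\cdot,[\,,\,],\varepsilon)$ with $(A,\cdot,\varepsilon)$ an $\varepsilon$-commutative associative algebra and $(A,[\,,\,],\varepsilon)$ a Lie color algebra such that $P_{x\cdot y}(z,w)=x\cdot P_y(z,w)+\varepsilon(x,y)y\cdot P_x(z,w)$ for homogeneous $x,y,z,w$, where $P_x(y,z)=[x,y\cdot z]-[x,y]\cdot z-\varepsilon(x,y)y\cdot[x,z]$. Representations: $\mu:A\to\mathfrak{gl}(V)$ with $\mu(x)V_a\subseteq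 V_{a+b}$ for $x\in A_b$ and $\mu(x\cdot y)=\mu(x)\mu(y)$ (for the associative algebra); $\rho:A\to\mathfrak{gl}(V)$ with the same degree condition and $\rho([x,y])=\rho(x)\rho(y)-\varepsilon(x,y)\rho(y)\rho(x)$ (for the Lie color algebra). A representation of the $F$-manifold color algebra $A$ is a triple $(W,\rho',\mu')$ with $\rho'$ a Lie color representation and $\mu'$ an associative representation on the graded space $W$ such that for homogeneous $x_1,x_2,x_3$: $R_{\rho',\mu'}(x_1\cdot x_2,x_3)=\mu'(x_1)R_{\rho',\mu'}(x_2,x_3)+\varepsilon(x_1,x_2)\mu'(x_2)R_{\rho',\mu'}(x_1,x_3)$ and $\mu'(P_{x_1}(x_2,x_3))=\varepsilon(x_1,x_2+x_3)S_{\rho',\mu'}(x_2,x_3)\mu'(x_1)-\mu'(x_1)S_{\rho',\mu'}(x_2,x_3)$, with $R_{\rho',\mu'}(x_1,x_2)=\rho'(x_1)\mu'(x_2)-\varepsilon(x_1,x_2)\mu'(x_2)\rho'(x_1)-\mu'([x_1,x_2])$ and $S_{\rho',\mu'}(x_1,x_2)=\mu'(x_1)\rho'(x_2)+\varepsilon(x_1,x_2)\mu'(x_2)\rho'(x_1)-\rho'(x_1\cdot x_2)$. The dual $V^*$ is $G$-graded by $V^*_a=\{\alpha\in V^*:\alpha(V_b)=0\text{ for all }b\neq -a\}$. For a linear map $\phi:A\to\mathfrak{gl}(V)$ (with $\phi(x)V_b\subseteq V_{a+b}$ for $x\in A_a$), $\phi^*:A\to\mathfrak{gl}(V^* )$ is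 defined by $\phi^*(x)\alpha\in V^*_{a+c}$ and $\langle\phi^*(x)\alpha,v\rangle=-\varepsilon(x,\alpha)\langle\alpha,\phi(x)v\rangle$ for $x\in A_a$, $v\in V_b$, $\alpha\in V^*_c$; this defines $\rho^*$ and $\mu^*$. *)

theory Defs
  imports Main "HOL-Library.Function_Algebras" "HOL-Computational_Algebra.Polynomial"
begin

definition alg_closed_field :: "'k::field itself \<Rightarrow> bool" where
  "alg_closed_field _ \<longleftrightarrow> (\<forall>p::'k poly. degree p \<ge> 1 \<longrightarrow> (\<exists>z. poly p z = 0))"

definition skew_bichar :: "('g::ab_group_add \<Rightarrow> 'g \<Rightarrow> 'k::field) \<Rightarrow> bool" where
  "skew_bichar eps \<longleftrightarrow>
     (\<forall>a b. eps a b \<noteq> 0) \<and>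
     (\<forall>a b. eps a b * eps b a = 1) \<and>
     (\<forall>a b c. eps a (b + c) = eps a b * eps a c) \<and>
     (\<forall>a b c. eps (a + b) c = eps a c * eps b c)"

definition hdec :: "('g \<Rightarrow> 'w::comm_monoid_add set) \<Rightarrow> 'w \<Rightarrow> ('g \<Rightarrow> 'w) \<Rightarrow> bool" where
  "hdec Wg w f \<longleftrightarrow> finite {g. f g \<noteq> 0} \<and> (\<forall>g. f g \<in> Wg g) \<and> w = (\<Sum>g\<in>{g. f g \<noteq> 0}. f g)"

text \<open>W is the direct sum of the subspaces Wg g.\<close>
definition graded_space ::
  "('k::field \<Rightarrow> 'w::ab_group_add \<Rightarrow> 'w) \<Rightarrow> 'w set \<Rightarrow> ('g \<Rightarrow> 'w set) \<Rightarrow> bool" where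
  "graded_space sc W Wg \<longleftrightarrow>
     (\<forall>g. Wg g \<subseteq> W \<and> 0 \<in> Wg g \<and> (\<forall>u\<in>Wg g. \<forall>v\<in>Wg g. u + v \<in> Wg g) \<and>
          (\<forall>c. \<forall>u\<in>Wg g. sc c u \<in> Wg g)) \<and>
     (\<forall>w. w \<in> W \<longleftrightarrow> (\<exists>f. hdec Wg w f)) \<and>
     (\<forall>w\<in>W. \<exists>!f. hdec Wg w f)"

definition gcomp :: "('g \<Rightarrow> 'w::comm_monoid_add set) \<Rightarrow> 'w \<Rightarrow> 'g \<Rightarrow> 'w" where
  "gcomp Wg w = (THE f. hdec Wg w f)"

definition fin_dim :: "('k::field \<Rightarrow> 'w::ab_group_add \<Rightarrow> 'w) \<Rightarrow> bool" where
  "fin_dim sc \<longleftrightarrow> (\<exists>B. finite B \<and> module.span sc B = UNIV)"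

definition bilinear_op :: "('k::field \<Rightarrow> 'a::ab_group_add \<Rightarrow> 'a) \<Rightarrow> ('a \<Rightarrow> 'a \<Rightarrow> 'a) \<Rightarrow> bool" where
  "bilinear_op scA m \<longleftrightarrow>
     (\<forall>x y z. m (x + y) z = m x z + m y z) \<and> (\<forall>x y z. m x (y + z) = m x y + m x z) \<and>
     (\<forall>c x y. m (scA c x) y = scA c (m x y)) \<and> (\<forall>c x y. m x (scA c y) = scA c (m x y))"

definition graded_op :: "('g::ab_group_add \<Rightarrow> 'a set) \<Rightarrow> ('a \<Rightarrow> 'a \<Rightarrow> 'a) \<Rightarrow> bool" where
  "graded_op Ag m \<longleftrightarrow> (\<forall>a b x y. x \<in> Ag a \<longrightarrow> y \<in> Ag b \<longrightarrow> m x y \<in> Ag (a + b))"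

definition eps_comm_assoc ::
  "('g::ab_group_add \<Rightarrow> 'g \<Rightarrow> 'k::field) \<Rightarrow> ('k \<Rightarrow> 'a::ab_group_add \<Rightarrow> 'a) \<Rightarrow> ('g \<Rightarrow> 'a set)
   \<Rightarrow> ('a \<Rightarrow> 'a \<Rightarrow> 'a) \<Rightarrow> bool" where
  "eps_comm_assoc eps scA Ag mul \<longleftrightarrow>
     bilinear_op scA mul \<and> graded_op Ag mul \<and>
     (\<forall>x y z. mul x (mul y z) = mul (mul x y) z) \<and>
     (\<forall>a b x y. x \<in> Ag a \<longrightarrow> y \<in> Ag b \<longrightarrow> mul x y = scA (eps a b) (mul y x))"

definition lie_color ::
  "('g::ab_group_add \<Rightarrow> 'g \<Rightarrow> 'k::field) \<Rightarrow> ('k \<Rightarrow> 'a::ab_group_add \<Rightarrow> 'a) \<Rightarrow> ('g \<Rightarrow> 'a set)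
   \<Rightarrow> ('a \<Rightarrow> 'a \<Rightarrow> 'a) \<Rightarrow> bool" where
  "lie_color eps scA Ag br \<longleftrightarrow>
     bilinear_op scA br \<and> graded_op Ag br \<and>
     (\<forall>a b x y. x \<in> Ag a \<longrightarrow> y \<in> Ag b \<longrightarrow> br x y = - scA (eps a b) (br y x)) \<and>
     (\<forall>a b c x y z. x \<in> Ag a \<longrightarrow> y \<in> Ag b \<longrightarrow> z \<in> Ag c \<longrightarrow>
        scA (eps c a) (br x (br y z)) + scA (eps b c) (br z (br x y)) + scA (eps a b) (br y (br z x)) = 0)"

text \<open>P_x(y,z) for x of degree a and y of degree b.\<close>
definition Pop ::
  "('g \<Rightarrow> 'g \<Rightarrow> 'k::field) \<Rightarrow> ('k \<Rightarrow> 'a::ab_group_add \<Rightarrow> 'a) \<Rightarrow> ('a \<Rightarrow> 'a \<Rightarrow> 'a) \<Rightarrow> ('a \<Rightarrow> 'a \<Rightarrow> 'a)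
   \<Rightarrow> 'g \<Rightarrow> 'g \<Rightarrow> 'a \<Rightarrow> 'a \<Rightarrow> 'a \<Rightarrow> 'a" where
  "Pop eps scA mul br a b x y z = br x (mul y z) - mul (br x y) z - scA (eps a b) (mul y (br x z))"

definition F_manifold_color ::
  "('g::ab_group_add \<Rightarrow> 'g \<Rightarrow> 'k::field) \<Rightarrow> ('k \<Rightarrow> 'a::ab_group_add \<Rightarrow> 'a) \<Rightarrow> ('g \<Rightarrow> 'a set)
   \<Rightarrow> ('a \<Rightarrow> 'a \<Rightarrow> 'a) \<Rightarrow> ('a \<Rightarrow> 'a \<Rightarrow> 'a) \<Rightarrow> bool" where
  "F_manifold_color eps scA Ag mul br \<longleftrightarrow>
     eps_comm_assoc eps scA Ag mul \<and> lie_color eps scA Ag br \<and>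
     (\<forall>a b c d x y z w. x \<in> Ag a \<longrightarrow> y \<in> Ag b \<longrightarrow> z \<in> Ag c \<longrightarrow> w \<in> Ag d \<longrightarrow>
        Pop eps scA mul br (a + b) c (mul x y) z w
        = mul x (Pop eps scA mul br b c y z w) + scA (eps a b) (mul y (Pop eps scA mul br a c x z w)))"

definition op_family ::
  "('k::field \<Rightarrow> 'a::ab_group_add \<Rightarrow> 'a) \<Rightarrow> ('g::ab_group_add \<Rightarrow> 'a set) \<Rightarrow>
   ('k \<Rightarrow> 'w::ab_group_add \<Rightarrow> 'w) \<Rightarrow> 'w set \<Rightarrow> ('g \<Rightarrow> 'w set) \<Rightarrow> ('a \<Rightarrow> 'w \<Rightarrow> 'w) \<Rightarrow> bool" where
  "op_family scA Ag scW W Wg phi \<longleftrightarrow>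
     (\<forall>x. \<forall>w\<in>W. phi x w \<in> W) \<and>
     (\<forall>x. \<forall>u\<in>W. \<forall>v\<in>W. phi x (u + v) = phi x u + phi x v) \<and>
     (\<forall>x c. \<forall>u\<in>W. phi x (scW c u) = scW c (phi x u)) \<and>
     (\<forall>x y. \<forall>w\<in>W. phi (x + y) w = phi x w + phi y w) \<and>
     (\<forall>c x. \<forall>w\<in>W. phi (scA c x) w = scW c (phi x w)) \<and>
     (\<forall>a b x w. x \<in> Ag b \<longrightarrow> w \<in> Wg a \<longrightarrow> phi x w \<in> Wg (a + b))"

definition lie_rep ::
  "('g::ab_group_add \<Rightarrow> 'g \<Rightarrow> 'k::field) \<Rightarrow> ('k \<Rightarrow> 'a::ab_group_add \<Rightarrow> 'a) \<Rightarrow> ('g \<Rightarrow> 'a set) \<Rightarrow>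
   ('a \<Rightarrow> 'a \<Rightarrow> 'a) \<Rightarrow> ('k \<Rightarrow> 'w::ab_group_add \<Rightarrow> 'w) \<Rightarrow> 'w set \<Rightarrow> ('g \<Rightarrow> 'w set) \<Rightarrow>
   ('a \<Rightarrow> 'w \<Rightarrow> 'w) \<Rightarrow> bool" where
  "lie_rep eps scA Ag br scW W Wg rho \<longleftrightarrow>
     op_family scA Ag scW W Wg rho \<and>
     (\<forall>a b x y. x \<in> Ag a \<longrightarrow> y \<in> Ag b \<longrightarrow>
        (\<forall>w\<in>W. rho (br x y) w = rho x (rho y w) - scW (eps a b) (rho y (rho x w))))"

definition assoc_rep ::
  "('k::field \<Rightarrow> 'a::ab_group_add \<Rightarrow> 'a) \<Rightarrow> ('g::ab_group_add \<Rightarrow> 'a set) \<Rightarrow>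
   ('a \<Rightarrow> 'a \<Rightarrow> 'a) \<Rightarrow> ('k \<Rightarrow> 'w::ab_group_add \<Rightarrow> 'w) \<Rightarrow> 'w set \<Rightarrow> ('g \<Rightarrow> 'w set) \<Rightarrow>
   ('a \<Rightarrow> 'w \<Rightarrow> 'w) \<Rightarrow> bool" where
  "assoc_rep scA Ag mul scW W Wg mu \<longleftrightarrow>
     op_family scA Ag scW W Wg mu \<and>
     (\<forall>x y. \<forall>w\<in>W. mu (mul x y) w = mu x (mu y w))"

text \<open>R_{rho,mu}(x,y), x of degree a, y of degree b, applied to w.\<close>
definition Rop ::
  "('g \<Rightarrow> 'g \<Rightarrow> 'k::field) \<Rightarrow> ('a \<Rightarrow> 'a \<Rightarrow> 'a) \<Rightarrow> ('k \<Rightarrow> 'w::ab_group_add \<Rightarrow> 'w) \<Rightarrow>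
   ('a \<Rightarrow> 'w \<Rightarrow> 'w) \<Rightarrow> ('a \<Rightarrow> 'w \<Rightarrow> 'w) \<Rightarrow> 'g \<Rightarrow> 'g \<Rightarrow> 'a \<Rightarrow> 'a \<Rightarrow> 'w \<Rightarrow> 'w" where
  "Rop eps br scW rho mu a b x y w =
     rho x (mu y w) - scW (eps a b) (mu y (rho x w)) - mu (br x y) w"

definition Sop ::
  "('g \<Rightarrow> 'g \<Rightarrow> 'k::field) \<Rightarrow> ('a \<Rightarrow> 'a \<Rightarrow> 'a) \<Rightarrow> ('k \<Rightarrow> 'w::ab_group_add \<Rightarrow> 'w) \<Rightarrow>
   ('a \<Rightarrow> 'w \<Rightarrow> 'w) \<Rightarrow> ('a \<Rightarrow> 'w \<Rightarrow> 'w) \<Rightarrow> 'g \<Rightarrow> 'g \<Rightarrow> 'a \<Rightarrow> 'a \<Rightarrow> 'w \<Rightarrow> 'w" where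
  "Sop eps mul scW rho mu a b x y w =
     mu x (rho y w) + scW (eps a b) (mu y (rho x w)) - rho (mul x y) w"

definition Top ::
  "('g \<Rightarrow> 'g \<Rightarrow> 'k::field) \<Rightarrow> ('a \<Rightarrow> 'a \<Rightarrow> 'a) \<Rightarrow> ('k \<Rightarrow> 'w::ab_group_add \<Rightarrow> 'w) \<Rightarrow>
   ('a \<Rightarrow> 'w \<Rightarrow> 'w) \<Rightarrow> ('a \<Rightarrow> 'w \<Rightarrow> 'w) \<Rightarrow> 'g \<Rightarrow> 'g \<Rightarrow> 'a \<Rightarrow> 'a \<Rightarrow> 'w \<Rightarrow> 'w" where
  "Top eps mul scW rho mu a b x y w =
     - scW (eps a b) (rho y (mu x w)) - rho x (mu y w) + rho (mul x y) w"

definition F_manifold_rep ::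
  "('g::ab_group_add \<Rightarrow> 'g \<Rightarrow> 'k::field) \<Rightarrow> ('k \<Rightarrow> 'a::ab_group_add \<Rightarrow> 'a) \<Rightarrow> ('g \<Rightarrow> 'a set) \<Rightarrow>
   ('a \<Rightarrow> 'a \<Rightarrow> 'a) \<Rightarrow> ('a \<Rightarrow> 'a \<Rightarrow> 'a) \<Rightarrow>
   ('k \<Rightarrow> 'w::ab_group_add \<Rightarrow> 'w) \<Rightarrow> 'w set \<Rightarrow> ('g \<Rightarrow> 'w set) \<Rightarrow>
   ('a \<Rightarrow> 'w \<Rightarrow> 'w) \<Rightarrow> ('a \<Rightarrow> 'w \<Rightarrow> 'w) \<Rightarrow> bool" where
  "F_manifold_rep eps scA Ag mul br scW W Wg rho mu \<longleftrightarrow>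
     lie_rep eps scA Ag br scW W Wg rho \<and> assoc_rep scA Ag mul scW W Wg mu \<and>
     (\<forall>a1 a2 a3 x1 x2 x3. x1 \<in> Ag a1 \<longrightarrow> x2 \<in> Ag a2 \<longrightarrow> x3 \<in> Ag a3 \<longrightarrow> (\<forall>w\<in>W.
        Rop eps br scW rho mu (a1 + a2) a3 (mul x1 x2) x3 w
        = mu x1 (Rop eps br scW rho mu a2 a3 x2 x3 w)
          + scW (eps a1 a2) (mu x2 (Rop eps br scW rho mu a1 a3 x1 x3 w)))) \<and>
     (\<forall>a1 a2 a3 x1 x2 x3. x1 \<in> Ag a1 \<longrightarrow> x2 \<in> Ag a2 \<longrightarrow> x3 \<in> Ag a3 \<longrightarrow> (\<forall>w\<in>W.
        mu (Pop eps scA mul br a1 a2 x1 x2 x3) w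
        = scW (eps a1 (a2 + a3)) (Sop eps mul scW rho mu a2 a3 x2 x3 (mu x1 w))
          - mu x1 (Sop eps mul scW rho mu a2 a3 x2 x3 w)))"

definition dual_scale :: "'k::field \<Rightarrow> ('v \<Rightarrow> 'k) \<Rightarrow> ('v \<Rightarrow> 'k)" where
  "dual_scale c \<alpha> = (\<lambda>v. c * \<alpha> v)"

definition dual_carrier :: "('k::field \<Rightarrow> 'v::ab_group_add \<Rightarrow> 'v) \<Rightarrow> ('v \<Rightarrow> 'k) set" where
  "dual_carrier scV = {\<alpha>. (\<forall>u v. \<alpha> (u + v) = \<alpha> u + \<alpha> v) \<and> (\<forall>c u. \<alpha> (scV c u) = c * \<alpha> u)}"

definition dual_grading ::
  "('k::field \<Rightarrow> 'v::ab_group_add \<Rightarrow> 'v) \<Rightarrow> ('g::ab_group_add \<Rightarrow> 'v set) \<Rightarrow> 'g \<Rightarrow> ('v \<Rightarrow> 'k) set" where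
  "dual_grading scV Vg a = {\<alpha> \<in> dual_carrier scV. \<forall>b. b \<noteq> - a \<longrightarrow> (\<forall>v\<in>Vg b. \<alpha> v = 0)}"

text \<open>phi^*: for homogeneous x (degree a) and alpha (degree c),
  phi^*(x) alpha = (v \<mapsto> - eps a c * alpha (phi x v)); extended bilinearly via homogeneous components.\<close>
definition dual_op ::
  "('g::ab_group_add \<Rightarrow> 'g \<Rightarrow> 'k::field) \<Rightarrow> ('g \<Rightarrow> 'a::comm_monoid_add set) \<Rightarrow>
   ('k \<Rightarrow> 'v::ab_group_add \<Rightarrow> 'v) \<Rightarrow> ('g \<Rightarrow> 'v set) \<Rightarrow> ('a \<Rightarrow> 'v \<Rightarrow> 'v) \<Rightarrow>
   'a \<Rightarrow> ('v \<Rightarrow> 'k) \<Rightarrow> ('v \<Rightarrow> 'k)" where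
  "dual_op eps Ag scV Vg phi x \<alpha> =
     (\<lambda>v. - (\<Sum>a\<in>{a. gcomp Ag x a \<noteq> 0}. \<Sum>c\<in>{c. gcomp (dual_grading scV Vg) \<alpha> c \<noteq> 0}.
              eps a c * gcomp (dual_grading scV Vg) \<alpha> c (phi (gcomp Ag x a) v)))"

definition neg_op :: "('a \<Rightarrow> 'w \<Rightarrow> 'w::group_add) \<Rightarrow> 'a \<Rightarrow> 'w \<Rightarrow> 'w" where
  "neg_op phi x w = - phi x w"

end

theory Submission
  imports Defs
begin


lemma vs_module: "vector_space sc \<Longrightarrow> module sc"
  by (simp add: module_iff_vector_space)

lemma hdec_sum_ext:
  assumes "hdec Wg w f" "finite S" "{g. f g \<noteq> 0} \<subseteq> S"
  shows "w = (\<Sum>g\<in>S. f g)"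
proof -
  have "w = (\<Sum>g\<in>{g. f g \<noteq> 0}. f g)" using assms(1) by (simp add: hdec_def)
  also have "\<dots> = (\<Sum>g\<in>S. f g)"
    by (rule sum.mono_neutral_left) (use assms in auto)
  finally show ?thesis .
qed

lemma gs_mem: "graded_space sc W Wg \<Longrightarrow> hdec Wg w f \<Longrightarrow> w \<in> W"
  unfolding graded_space_def by blast

lemma gs_zero: "graded_space sc W Wg \<Longrightarrow> 0 \<in> Wg g"
  unfolding graded_space_def by blast
lemma gs_add: "graded_space sc W Wg \<Longrightarrow> u \<in> Wg g \<Longrightarrow> v \<in> Wg g \<Longrightarrow> u + v \<in> Wg g"
  unfolding graded_space_def by blast
lemma gs_scale: "graded_space sc W Wg \<Longrightarrow> u \<in> Wg g \<Longrightarrow> sc c u \<in> Wg g"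
  unfolding graded_space_def by blast
lemma gs_subset: "graded_space sc W Wg \<Longrightarrow> u \<in> Wg g \<Longrightarrow> u \<in> W"
  unfolding graded_space_def by blast

lemma gcomp_eq: "graded_space sc W Wg \<Longrightarrow> hdec Wg w f \<Longrightarrow> gcomp Wg w = f"
  unfolding gcomp_def
  apply (rule the1_equality)
  using gs_mem[of sc W Wg w f] unfolding graded_space_def by blast+

lemma gcomp_hdec: "graded_space sc W Wg \<Longrightarrow> w \<in> W \<Longrightarrow> hdec Wg w (gcomp Wg w)"
  unfolding gcomp_def graded_space_def by (metis theI')

lemma gcomp_in: "graded_space sc W Wg \<Longrightarrow> w \<in> W \<Longrightarrow> gcomp Wg w g \<in> Wg g"
  using gcomp_hdec unfolding hdec_def by blast

lemma gcomp_fin: "graded_space sc W Wg \<Longrightarrow> w \<in> W \<Longrightarrow> finite {g. gcomp Wg w g \<noteq> 0}"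
  using gcomp_hdec unfolding hdec_def by blast

lemma gcomp_sum: "graded_space sc W Wg \<Longrightarrow> w \<in> W \<Longrightarrow> finite S \<Longrightarrow> {g. gcomp Wg w g \<noteq> 0} \<subseteq> S
   \<Longrightarrow> w = (\<Sum>g\<in>S. gcomp Wg w g)"
  by (rule hdec_sum_ext, rule gcomp_hdec, assumption+)

lemma hdec_single:
  assumes "graded_space sc W Wg" "x \<in> Wg a"
  shows "hdec Wg x (\<lambda>g. if g = a then x else 0)"
proof -
  have S: "{g. (if g = a then x else 0) \<noteq> 0} = (if x = 0 then {} else {a})" by auto
  have fin: "finite {g. (if g = a then x else 0) \<noteq> 0}" unfolding S by simp
  have sm: "x = (\<Sum>g\<in>{g. (if g = a then x else 0) \<noteq> 0}. (if g = a then x else 0))"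
    unfolding S by simp
  have mem: "\<forall>g. (if g = a then x else 0) \<in> Wg g"
    using gs_zero[OF assms(1)] assms(2) by simp
  show ?thesis unfolding hdec_def using fin sm mem by blast
qed

lemma gcomp_single: "graded_space sc W Wg \<Longrightarrow> x \<in> Wg a \<Longrightarrow> gcomp Wg x = (\<lambda>g. if g = a then x else 0)"
  by (rule gcomp_eq, assumption, rule hdec_single)

lemma hdec_zero: "graded_space sc W Wg \<Longrightarrow> hdec Wg 0 (\<lambda>_. 0)"
  unfolding hdec_def using gs_zero[of sc W Wg] by simp

lemma gcomp_zero: "graded_space sc W Wg \<Longrightarrow> gcomp Wg 0 = (\<lambda>_. 0)"
  by (rule gcomp_eq, assumption, rule hdec_zero)

lemma hdec_add:
  assumes gs: "graded_space sc W Wg" and hx: "hdec Wg x f" and hy: "hdec Wg y h"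
  shows "hdec Wg (x + y) (\<lambda>g. f g + h g)"
proof -
  let ?S = "{g. f g \<noteq> 0} \<union> {g. h g \<noteq> 0}"
  have fS: "finite ?S" using hx hy by (simp add: hdec_def)
  have sub: "{g. f g + h g \<noteq> 0} \<subseteq> ?S" by auto
  have "x + y = (\<Sum>g\<in>?S. f g) + (\<Sum>g\<in>?S. h g)"
    using hdec_sum_ext[OF hx fS] hdec_sum_ext[OF hy fS] by auto
  also have "\<dots> = (\<Sum>g\<in>?S. f g + h g)" by (simp add: sum.distrib)
  also have "\<dots> = (\<Sum>g\<in>{g. f g + h g \<noteq> 0}. f g + h g)"
    by (rule sum.mono_neutral_right) (use fS sub in auto)
  finally show ?thesis unfolding hdec_def
    using finite_subset[OF sub fS] gs_add[OF gs] hx hy by (auto simp: hdec_def)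
qed

lemma hdec_scale:
  assumes gs: "graded_space sc W Wg" and vs: "vector_space sc" and hx: "hdec Wg x f"
  shows "hdec Wg (sc c x) (\<lambda>g. sc c (f g))"
proof -
  interpret module sc using vs by (rule vs_module)
  let ?S = "{g. f g \<noteq> 0}"
  have fS: "finite ?S" using hx by (simp add: hdec_def)
  have sub: "{g. sc c (f g) \<noteq> 0} \<subseteq> ?S" by auto
  have "sc c x = sc c (\<Sum>g\<in>?S. f g)"
    using hdec_sum_ext[OF hx fS] by auto
  also have "\<dots> = (\<Sum>g\<in>?S. sc c (f g))" by (simp add: scale_sum_right)
  also have "\<dots> = (\<Sum>g\<in>{g. sc c (f g) \<noteq> 0}. sc c (f g))"
    by (rule sum.mono_neutral_right) (use fS sub in auto)
  finally show ?thesis unfolding hdec_def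
    using finite_subset[OF sub fS] gs_scale[OF gs] hx by (auto simp: hdec_def)
qed

lemma gs_add_mem: "graded_space sc W Wg \<Longrightarrow> x \<in> W \<Longrightarrow> y \<in> W \<Longrightarrow> x + y \<in> W"
  by (rule gs_mem, assumption, rule hdec_add, assumption, (rule gcomp_hdec; assumption)+)

lemma gs_scale_mem: "graded_space sc W Wg \<Longrightarrow> vector_space sc \<Longrightarrow> x \<in> W \<Longrightarrow> sc c x \<in> W"
  by (rule gs_mem, assumption, rule hdec_scale, assumption, assumption, (rule gcomp_hdec; assumption))

lemma gs_zero_mem: "graded_space sc W Wg \<Longrightarrow> 0 \<in> W"
  by (rule gs_mem, assumption, rule hdec_zero, assumption)

lemma gcomp_add: "graded_space sc W Wg \<Longrightarrow> x \<in> W \<Longrightarrow> y \<in> W \<Longrightarrow>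
   gcomp Wg (x + y) = (\<lambda>g. gcomp Wg x g + gcomp Wg y g)"
  by (rule gcomp_eq, assumption, rule hdec_add, assumption, (rule gcomp_hdec; assumption)+)

lemma gcomp_scale: "graded_space sc W Wg \<Longrightarrow> vector_space sc \<Longrightarrow> x \<in> W \<Longrightarrow>
   gcomp Wg (sc c x) = (\<lambda>g. sc c (gcomp Wg x g))"
  by (rule gcomp_eq, assumption, rule hdec_scale, assumption, assumption, (rule gcomp_hdec; assumption))

lemma gs_ext:
  fixes F G :: "'w::ab_group_add \<Rightarrow> 'b::ab_group_add"
  assumes gs: "graded_space sc W Wg"
    and F: "\<And>u v. u \<in> W \<Longrightarrow> v \<in> W \<Longrightarrow> F (u + v) = F u + F v"
    and G: "\<And>u v. u \<in> W \<Longrightarrow> v \<in> W \<Longrightarrow> G (u + v) = G u + G v"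
    and FG: "\<And>c u. u \<in> Wg c \<Longrightarrow> F u = G u"
    and w: "w \<in> W"
  shows "F w = G w"
proof -
  have z: "0 \<in> W" using gs_zero_mem[OF gs] .
  have F0: "F 0 = 0" using F[OF z z] by simp
  have G0: "G 0 = 0" using G[OF z z] by simp
  have ind: "(\<Sum>c\<in>T. gcomp Wg w c) \<in> W \<and> F (\<Sum>c\<in>T. gcomp Wg w c) = G (\<Sum>c\<in>T. gcomp Wg w c)"
    if "finite T" for T
    using that
  proof (induction T rule: finite_induct)
    case empty then show ?case using z F0 G0 by simp
  next
    case (insert c T)
    have m: "gcomp Wg w c \<in> W" using gs_subset[OF gs gcomp_in[OF gs w]] .
    show ?case using insert m gs_add_mem[OF gs] F G FG[OF gcomp_in[OF gs w]] by simp
  qed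
  have "w = (\<Sum>c\<in>{g. gcomp Wg w g \<noteq> 0}. gcomp Wg w c)"
    using gcomp_sum[OF gs w gcomp_fin[OF gs w]] by simp
  then show ?thesis using ind[OF gcomp_fin[OF gs w]] by metis
qed




lemma sum_fun_apply: "(\<Sum>c\<in>T. f c) v = (\<Sum>c\<in>T. f c v)"
  by (induct T rule: infinite_finite_induct) simp_all

lemma dc_add: "\<alpha> \<in> dual_carrier scV \<Longrightarrow> \<alpha> (u + v) = \<alpha> u + \<alpha> v"
  unfolding dual_carrier_def by blast
lemma dc_scale: "\<alpha> \<in> dual_carrier scV \<Longrightarrow> \<alpha> (scV c u) = c * \<alpha> u"
  unfolding dual_carrier_def by blast
lemma dc_zero: "\<alpha> \<in> dual_carrier scV \<Longrightarrow> \<alpha> 0 = 0"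
proof -
  assume a: "\<alpha> \<in> dual_carrier scV"
  have "\<alpha> (0 + 0) = \<alpha> 0 + \<alpha> 0" by (rule dc_add[OF a])
  hence "\<alpha> 0 = \<alpha> 0 + \<alpha> 0" by (simp only: add_0)
  thus ?thesis by (metis add_cancel_right_right)
qed
lemma dc_minus: "\<alpha> \<in> dual_carrier scV \<Longrightarrow> \<alpha> (- u) = - \<alpha> u"
  using dc_add[of \<alpha> scV u "- u"] dc_zero[of \<alpha> scV] by (simp add: eq_neg_iff_add_eq_0 add.commute)
lemma dc_diff: "\<alpha> \<in> dual_carrier scV \<Longrightarrow> \<alpha> (u - v) = \<alpha> u - \<alpha> v"
  using dc_add[of \<alpha> scV u "- v"] dc_minus[of \<alpha> scV v] by simp
lemma dc_sum: "\<alpha> \<in> dual_carrier scV \<Longrightarrow> \<alpha> (\<Sum>g\<in>T. f g) = (\<Sum>g\<in>T. \<alpha> (f g))"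
proof -
  assume a: "\<alpha> \<in> dual_carrier scV"
  have "sum (\<alpha> \<circ> f) T = \<alpha> (sum f T)"
    by (rule sum_comp_morphism, rule dc_zero[OF a], rule dc_add[OF a])
  thus ?thesis by (simp add: o_def)
qed

lemma dg_dc: "\<alpha> \<in> dual_grading scV Vg c \<Longrightarrow> \<alpha> \<in> dual_carrier scV"
  unfolding dual_grading_def by blast
lemma dg_van: "\<alpha> \<in> dual_grading scV Vg c \<Longrightarrow> v \<in> Vg b \<Longrightarrow> b \<noteq> - c \<Longrightarrow> \<alpha> v = 0"
  unfolding dual_grading_def by blast

lemma dc_add_mem: "\<alpha> \<in> dual_carrier scV \<Longrightarrow> \<beta> \<in> dual_carrier scV \<Longrightarrow> \<alpha> + \<beta> \<in> dual_carrier scV"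
  unfolding dual_carrier_def by (simp add: algebra_simps)
lemma dc_scale_mem: "\<alpha> \<in> dual_carrier scV \<Longrightarrow> dual_scale c \<alpha> \<in> dual_carrier scV"
  unfolding dual_carrier_def dual_scale_def by (simp add: algebra_simps)
lemma dc_zero_mem: "0 \<in> dual_carrier scV"
  unfolding dual_carrier_def by simp
lemma dc_sum_mem: "(\<And>c. c \<in> T \<Longrightarrow> f c \<in> dual_carrier scV) \<Longrightarrow> (\<Sum>c\<in>T. f c) \<in> dual_carrier scV"
  by (induct T rule: infinite_finite_induct) (simp_all add: dc_zero_mem dc_add_mem)

lemma vs_dual: "vector_space (dual_scale :: 'k::field \<Rightarrow> ('v \<Rightarrow> 'k) \<Rightarrow> ('v \<Rightarrow> 'k))"
  unfolding vector_space_def dual_scale_def by (simp add: fun_eq_iff algebra_simps)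

lemma fin_support:
  assumes gs: "graded_space scV UNIV Vg" and vs: "vector_space scV" and fd: "fin_dim scV"
  shows "finite {g. \<exists>v\<in>Vg g. v \<noteq> 0}"
proof -
  interpret module scV using vs by (rule vs_module)
  obtain B where fB: "finite B" and sB: "span B = UNIV" using fd unfolding fin_dim_def by blast
  let ?D = "\<Union>b\<in>B. {g. gcomp Vg b g \<noteq> 0}"
  have fD: "finite ?D" by (rule finite_UN_I[OF fB], rule gcomp_fin[OF gs], simp)
  have "g \<in> ?D" if v: "v \<in> Vg g" "v \<noteq> 0" for g v
  proof (rule ccontr)
    assume ng: "g \<notin> ?D"
    have sub: "subspace {v. gcomp Vg v g = 0}"
      unfolding subspace_def
      using gcomp_zero[OF gs] gcomp_add[OF gs] gcomp_scale[OF gs vs] by simp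
    have "v \<in> span B" using sB by simp
    hence "gcomp Vg v g = 0"
    proof (rule span_induct[where P = "\<lambda>v. gcomp Vg v g = 0"])
      show "subspace (Collect (\<lambda>v. gcomp Vg v g = 0))" using sub by simp
    next
      fix x assume "x \<in> B" thus "gcomp Vg x g = 0" using ng by blast
    qed
    moreover have "gcomp Vg v g = v" using gcomp_single[OF gs v(1)] by simp
    ultimately show False using v(2) by simp
  qed
  hence "{g. \<exists>v\<in>Vg g. v \<noteq> 0} \<subseteq> ?D" by blast
  thus ?thesis using fD by (rule finite_subset)
qed

definition dcomp :: "('g::ab_group_add \<Rightarrow> 'v::ab_group_add set) \<Rightarrow> ('v \<Rightarrow> 'k::field) \<Rightarrow> 'g \<Rightarrow> ('v \<Rightarrow> 'k)" where
  "dcomp Vg \<alpha> c = (\<lambda>v. \<alpha> (gcomp Vg v (- c)))"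

lemma dcomp_in:
  assumes gs: "graded_space scV UNIV Vg" and vs: "vector_space scV" and a: "\<alpha> \<in> dual_carrier scV"
  shows "dcomp Vg \<alpha> c \<in> dual_grading scV Vg c"
proof -
  interpret module scV using vs by (rule vs_module)
  have "dcomp Vg \<alpha> c \<in> dual_carrier scV"
    unfolding dual_carrier_def dcomp_def
    using gcomp_add[OF gs] gcomp_scale[OF gs vs] dc_add[OF a] dc_scale[OF a] by simp
  moreover have "dcomp Vg \<alpha> c v = 0" if "v \<in> Vg b" "b \<noteq> - c" for b v
    unfolding dcomp_def using gcomp_single[OF gs that(1)] that(2) dc_zero[OF a] by simp
  ultimately show ?thesis unfolding dual_grading_def by blast
qed

lemma dcomp_hdec:
  assumes gs: "graded_space scV UNIV Vg" and vs: "vector_space scV" and fd: "fin_dim scV"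
    and a: "\<alpha> \<in> dual_carrier scV"
  shows "hdec (dual_grading scV Vg) \<alpha> (dcomp Vg \<alpha>)"
proof -
  let ?D = "{g. \<exists>v\<in>Vg g. v \<noteq> 0}"
  have fD: "finite ?D" by (rule fin_support[OF gs vs fd])
  have sub: "{c. dcomp Vg \<alpha> c \<noteq> 0} \<subseteq> uminus ` ?D"
  proof
    fix c assume "c \<in> {c. dcomp Vg \<alpha> c \<noteq> 0}"
    hence "\<exists>v. dcomp Vg \<alpha> c v \<noteq> 0" by (simp add: fun_eq_iff)
    then obtain v where "\<alpha> (gcomp Vg v (- c)) \<noteq> 0" unfolding dcomp_def by blast
    hence "gcomp Vg v (- c) \<noteq> 0" using dc_zero[OF a] by auto
    moreover have "gcomp Vg v (- c) \<in> Vg (- c)" using gcomp_in[OF gs] by simp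
    ultimately have "- c \<in> ?D" by blast
    hence "- (- c) \<in> uminus ` ?D" by (rule imageI)
    thus "c \<in> uminus ` ?D" by simp
  qed
  have fS: "finite {c. dcomp Vg \<alpha> c \<noteq> 0}" using fD by (rule finite_subset[OF sub, OF finite_imageI])
  have eq: "\<alpha> v = (\<Sum>c\<in>{c. dcomp Vg \<alpha> c \<noteq> 0}. dcomp Vg \<alpha> c v)" for v
  proof -
    let ?S = "{c. dcomp Vg \<alpha> c \<noteq> 0}"
    let ?Sv = "{g. gcomp Vg v g \<noteq> 0}"
    let ?U = "?S \<union> uminus ` ?Sv"
    have fSv: "finite ?Sv" using gcomp_fin[OF gs] by simp
    have fU: "finite ?U" using fS fSv by simp
    have inj: "inj_on uminus ?Sv" by (simp add: inj_on_def)
    have "\<alpha> v = \<alpha> (\<Sum>g\<in>?Sv. gcomp Vg v g)" using gcomp_sum[OF gs _ fSv] by simp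
    also have "\<dots> = (\<Sum>g\<in>?Sv. \<alpha> (gcomp Vg v g))" by (rule dc_sum[OF a])
    also have "\<dots> = (\<Sum>c\<in>uminus ` ?Sv. \<alpha> (gcomp Vg v (- c)))"
      by (simp add: sum.reindex[OF inj] o_def)
    also have "\<dots> = (\<Sum>c\<in>?U. \<alpha> (gcomp Vg v (- c)))"
    proof (rule sum.mono_neutral_left[OF fU])
      show "uminus ` ?Sv \<subseteq> ?U" by (rule Un_upper2)
      show "\<forall>i\<in>?U - uminus ` ?Sv. \<alpha> (gcomp Vg v (- i)) = 0"
      proof
        fix i assume i: "i \<in> ?U - uminus ` ?Sv"
        have "gcomp Vg v (- i) = 0"
        proof (rule ccontr)
          assume "gcomp Vg v (- i) \<noteq> 0"
          hence "- i \<in> ?Sv" by simp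
          hence "- (- i) \<in> uminus ` ?Sv" by (rule imageI)
          thus False using i by simp
        qed
        thus "\<alpha> (gcomp Vg v (- i)) = 0" using dc_zero[OF a] by simp
      qed
    qed
    also have "\<dots> = (\<Sum>c\<in>?S. \<alpha> (gcomp Vg v (- c)))"
    proof (rule sum.mono_neutral_right[OF fU])
      show "?S \<subseteq> ?U" by (rule Un_upper1)
      show "\<forall>i\<in>?U - ?S. \<alpha> (gcomp Vg v (- i)) = 0"
      proof
        fix i assume i: "i \<in> ?U - ?S"
        hence "dcomp Vg \<alpha> i = 0" by simp
        hence "dcomp Vg \<alpha> i v = 0" by simp
        thus "\<alpha> (gcomp Vg v (- i)) = 0" by (simp add: dcomp_def)
      qed
    qed
    finally show ?thesis by (simp add: dcomp_def)
  qed
  have eqf: "\<alpha> = (\<Sum>c\<in>{c. dcomp Vg \<alpha> c \<noteq> 0}. dcomp Vg \<alpha> c)"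
    by (rule ext) (simp only: sum_fun_apply eq)
  show ?thesis unfolding hdec_def
    using fS dcomp_in[OF gs vs a] eqf by blast
qed

lemma dual_hdec_unique:
  assumes gs: "graded_space scV UNIV Vg" and vs: "vector_space scV"
    and h: "hdec (dual_grading scV Vg) \<alpha> h"
  shows "h = dcomp Vg \<alpha>"
proof (intro ext)
  fix c v
  let ?S = "{c. h c \<noteq> 0}"
  have fS: "finite ?S" and hin: "\<And>c. h c \<in> dual_grading scV Vg c"
    and aeq: "\<alpha> = (\<Sum>c\<in>?S. h c)" using h unfolding hdec_def by auto
  have hc: "h c \<in> dual_carrier scV" using dg_dc[OF hin] .
  let ?w = "gcomp Vg v (- c)"
  have win: "?w \<in> Vg (- c)" using gcomp_in[OF gs] by simp
  have van: "h c' ?w = 0" if "c' \<noteq> c" for c'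
    using dg_van[OF hin win] that by simp
  have "\<alpha> ?w = (\<Sum>c'\<in>?S. h c' ?w)" using aeq by (simp add: sum_fun_apply)
  also have "\<dots> = (\<Sum>c'\<in>?S. if c' = c then h c ?w else 0)"
    by (rule sum.cong) (auto simp: van)
  also have "\<dots> = h c ?w" using fS by (auto simp: sum.delta)
  finally have e1: "\<alpha> ?w = h c ?w" .
  let ?Sv = "{g. gcomp Vg v g \<noteq> 0}"
  have fSv: "finite ?Sv" using gcomp_fin[OF gs] by simp
  have van2: "h c (gcomp Vg v g) = 0" if "g \<noteq> - c" for g
    using dg_van[OF hin gcomp_in[OF gs]] that by simp
  have "h c v = h c (\<Sum>g\<in>?Sv. gcomp Vg v g)" using gcomp_sum[OF gs _ fSv] by simp
  also have "\<dots> = (\<Sum>g\<in>?Sv. h c (gcomp Vg v g))" by (rule dc_sum[OF hc])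
  also have "\<dots> = (\<Sum>g\<in>?Sv. if g = - c then h c ?w else 0)"
    by (rule sum.cong) (auto simp: van2)
  also have "\<dots> = h c ?w" using fSv dc_zero[OF hc] by (auto simp: sum.delta)
  finally show "h c v = dcomp Vg \<alpha> c v" using e1 by (simp add: dcomp_def)
qed

lemma dual_graded:
  assumes gs: "graded_space scV UNIV Vg" and vs: "vector_space scV" and fd: "fin_dim scV"
  shows "graded_space dual_scale (dual_carrier scV) (dual_grading scV Vg)"
proof -
  have A: "\<forall>g. dual_grading scV Vg g \<subseteq> dual_carrier scV \<and> 0 \<in> dual_grading scV Vg g \<and>
     (\<forall>u\<in>dual_grading scV Vg g. \<forall>v\<in>dual_grading scV Vg g. u + v \<in> dual_grading scV Vg g) \<and>
     (\<forall>c. \<forall>u\<in>dual_grading scV Vg g. dual_scale c u \<in> dual_grading scV Vg g)"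
    unfolding dual_grading_def
    using dc_zero_mem dc_add_mem dc_scale_mem by (auto simp: dual_scale_def)
  have B: "w \<in> dual_carrier scV \<longleftrightarrow> (\<exists>f. hdec (dual_grading scV Vg) w f)" for w
  proof
    assume w0: "w \<in> dual_carrier scV" show "\<exists>f. hdec (dual_grading scV Vg) w f"
      using dcomp_hdec[OF gs vs fd w0] by blast
  next
    assume "\<exists>f. hdec (dual_grading scV Vg) w f"
    then obtain f where "hdec (dual_grading scV Vg) w f" by blast
    thus "w \<in> dual_carrier scV" unfolding hdec_def by (metis dc_sum_mem dg_dc)
  qed
  have C: "\<forall>w\<in>dual_carrier scV. \<exists>!f. hdec (dual_grading scV Vg) w f"
  proof
    fix w assume w: "w \<in> dual_carrier scV"
    show "\<exists>!f. hdec (dual_grading scV Vg) w f"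
      by (rule ex1I[of _ "dcomp Vg w"], rule dcomp_hdec[OF gs vs fd w], rule dual_hdec_unique[OF gs vs])
  qed
  show ?thesis unfolding graded_space_def using A B C by blast
qed




lemma of_add_x: "op_family scA Ag scW W Wg phi \<Longrightarrow> w \<in> W \<Longrightarrow> phi (x + y) w = phi x w + phi y w"
  unfolding op_family_def by blast
lemma of_scale_x: "op_family scA Ag scW W Wg phi \<Longrightarrow> w \<in> W \<Longrightarrow> phi (scA c x) w = scW c (phi x w)"
  unfolding op_family_def by blast
lemma of_add_w: "op_family scA Ag scW W Wg phi \<Longrightarrow> u \<in> W \<Longrightarrow> v \<in> W \<Longrightarrow> phi x (u + v) = phi x u + phi x v"
  unfolding op_family_def by blast
lemma of_scale_w: "op_family scA Ag scW W Wg phi \<Longrightarrow> u \<in> W \<Longrightarrow> phi x (scW c u) = scW c (phi x u)"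
  unfolding op_family_def by blast
lemma of_mem: "op_family scA Ag scW W Wg phi \<Longrightarrow> w \<in> W \<Longrightarrow> phi x w \<in> W"
  unfolding op_family_def by blast
lemma of_deg: "op_family scA Ag scW W Wg phi \<Longrightarrow> x \<in> Ag b \<Longrightarrow> w \<in> Wg a \<Longrightarrow> phi x w \<in> Wg (a + b)"
  unfolding op_family_def by blast
lemma of_zero_x: "op_family scA Ag scW W Wg phi \<Longrightarrow> w \<in> W \<Longrightarrow> phi 0 w = 0"
  using of_add_x[of scA Ag scW W Wg phi w 0 0] by (metis add_0 add_cancel_right_right)

lemma neg_op_family:
  assumes of: "op_family scA Ag sc W Wg phi" and gs: "graded_space sc W Wg" and vs: "vector_space sc"
  shows "op_family scA Ag sc W Wg (neg_op phi)"
proof -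
  interpret module sc using vs by (rule vs_module)
  have neg: "- u = sc (-1) u" for u by simp
  show ?thesis unfolding op_family_def neg_op_def
  proof (intro conjI allI ballI impI)
    fix x w assume "w \<in> W" thus "- phi x w \<in> W"
      unfolding neg by (rule gs_scale_mem[OF gs vs of_mem[OF of]])
  next
    fix x u v assume "u \<in> W" "v \<in> W" thus "- phi x (u + v) = - phi x u + - phi x v"
      using of_add_w[OF of] by simp
  next
    fix x c u assume "u \<in> W" thus "- phi x (sc c u) = sc c (- phi x u)"
      using of_scale_w[OF of] by simp
  next
    fix x y w assume "w \<in> W" thus "- phi (x + y) w = - phi x w + - phi y w"
      using of_add_x[OF of] by simp
  next
    fix c x w assume "w \<in> W" thus "- phi (scA c x) w = sc c (- phi x w)"
      using of_scale_x[OF of] by simp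
  next
    fix a b x w assume "x \<in> Ag b" "w \<in> Wg a" thus "- phi x w \<in> Wg (a + b)"
      unfolding neg by (intro gs_scale[OF gs] of_deg[OF of])
  qed
qed

locale fctx =
  fixes eps :: "'g::ab_group_add \<Rightarrow> 'g \<Rightarrow> 'k::field"
    and scA :: "'k \<Rightarrow> 'a::ab_group_add \<Rightarrow> 'a" and Ag :: "'g \<Rightarrow> 'a set"
    and scV :: "'k \<Rightarrow> 'v::ab_group_add \<Rightarrow> 'v" and Vg :: "'g \<Rightarrow> 'v set"
  assumes gsA: "graded_space scA UNIV Ag" and vsA: "vector_space scA"
    and gsV: "graded_space scV UNIV Vg" and vsV: "vector_space scV" and fdV: "fin_dim scV"
begin

abbreviation "DG \<equiv> dual_grading scV Vg"
abbreviation "DC \<equiv> dual_carrier scV"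

lemma gsD: "graded_space dual_scale DC DG"
  by (rule dual_graded[OF gsV vsV fdV])

lemma gD_dc: "\<alpha> \<in> DC \<Longrightarrow> gcomp DG \<alpha> c \<in> DC"
  using dg_dc[OF gcomp_in[OF gsD]] .

lemma dual_op_expand:
  assumes of: "op_family scA Ag scV UNIV Vg phi" and a: "\<alpha> \<in> DC"
    and fS: "finite S" and fT: "finite T"
    and sS: "{g. gcomp Ag x g \<noteq> 0} \<subseteq> S" and sT: "{g. gcomp DG \<alpha> g \<noteq> 0} \<subseteq> T"
  shows "dual_op eps Ag scV Vg phi x \<alpha> v =
    - (\<Sum>a\<in>S. \<Sum>c\<in>T. eps a c * gcomp DG \<alpha> c (phi (gcomp Ag x a) v))"
proof -
  let ?S0 = "{g. gcomp Ag x g \<noteq> 0}" and ?T0 = "{g. gcomp DG \<alpha> g \<noteq> 0}"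
  have inner: "(\<Sum>c\<in>?T0. eps a c * gcomp DG \<alpha> c (phi (gcomp Ag x a) v))
      = (\<Sum>c\<in>T. eps a c * gcomp DG \<alpha> c (phi (gcomp Ag x a) v))" for a
    by (rule sum.mono_neutral_left[OF fT sT]) auto
  have outer: "(\<Sum>a\<in>?S0. \<Sum>c\<in>T. eps a c * gcomp DG \<alpha> c (phi (gcomp Ag x a) v))
      = (\<Sum>a\<in>S. \<Sum>c\<in>T. eps a c * gcomp DG \<alpha> c (phi (gcomp Ag x a) v))"
  proof (rule sum.mono_neutral_left[OF fS sS], intro ballI)
    fix a assume "a \<in> S - ?S0"
    hence z: "gcomp Ag x a = 0" by simp
    show "(\<Sum>c\<in>T. eps a c * gcomp DG \<alpha> c (phi (gcomp Ag x a) v)) = 0"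
      unfolding z of_zero_x[OF of UNIV_I] using dc_zero[OF gD_dc[OF a]] by simp
  qed
  show ?thesis unfolding dual_op_def using inner outer by simp
qed

lemma gcomp_A_single_supp: assumes x: "x \<in> Ag a" shows "{g. gcomp Ag x g \<noteq> 0} \<subseteq> {a}"
  using gcomp_single[OF gsA x] by auto
lemma gcomp_D_single_supp: assumes x: "\<alpha> \<in> DG c" shows "{g. gcomp DG \<alpha> g \<noteq> 0} \<subseteq> {c}"
  using gcomp_single[OF gsD x] by auto

lemma dual_op_hom:
  assumes of: "op_family scA Ag scV UNIV Vg phi" and x: "x \<in> Ag a" and al: "\<alpha> \<in> DG c"
  shows "dual_op eps Ag scV Vg phi x \<alpha> = (\<lambda>v. - (eps a c * \<alpha> (phi x v)))"
proof
  fix v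
  have "dual_op eps Ag scV Vg phi x \<alpha> v = - (\<Sum>a'\<in>{a}. \<Sum>c'\<in>{c}. eps a' c' * gcomp DG \<alpha> c' (phi (gcomp Ag x a') v))"
    by (rule dual_op_expand[OF of dg_dc[OF al] _ _ gcomp_A_single_supp[OF x] gcomp_D_single_supp[OF al]]) simp_all
  also have "\<dots> = - (eps a c * \<alpha> (phi x v))"
    using gcomp_single[OF gsA x] gcomp_single[OF gsD al] by simp
  finally show "dual_op eps Ag scV Vg phi x \<alpha> v = - (eps a c * \<alpha> (phi x v))" .
qed

lemma supp_fin_A: "finite {g. gcomp Ag x g \<noteq> 0}"
  using gcomp_fin[OF gsA] by simp
lemma supp_fin_D: "\<alpha> \<in> DC \<Longrightarrow> finite {g. gcomp DG \<alpha> g \<noteq> 0}"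
  using gcomp_fin[OF gsD] by simp

lemma dual_op_family:
  assumes of: "op_family scA Ag scV UNIV Vg phi"
  shows "op_family scA Ag dual_scale DC DG (dual_op eps Ag scV Vg phi)"
  unfolding op_family_def
proof (intro conjI allI ballI impI)
  fix x w assume w: "w \<in> DC"
  let ?S = "{g. gcomp Ag x g \<noteq> 0}" and ?T = "{g. gcomp DG w g \<noteq> 0}"
  note E = dual_op_expand[OF of w supp_fin_A supp_fin_D[OF w] subset_refl subset_refl]
  have gw: "\<And>c. gcomp DG w c \<in> DC" using gD_dc[OF w] .
  show "dual_op eps Ag scV Vg phi x w \<in> DC"
    unfolding dual_carrier_def
  proof (intro CollectI conjI allI)
    fix u v
    show "dual_op eps Ag scV Vg phi x w (u + v) = dual_op eps Ag scV Vg phi x w u + dual_op eps Ag scV Vg phi x w v"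
      unfolding E using of_add_w[OF of UNIV_I UNIV_I] dc_add[OF gw]
      by (simp add: sum.distrib distrib_left)
  next
    fix c u
    show "dual_op eps Ag scV Vg phi x w (scV c u) = c * dual_op eps Ag scV Vg phi x w u"
      unfolding E using of_scale_w[OF of UNIV_I] dc_scale[OF gw]
      by (simp add: sum_distrib_left mult.left_commute)
  qed
next
  fix x u v assume u: "u \<in> DC" and v: "v \<in> DC"
  have uv: "u + v \<in> DC" by (rule dc_add_mem[OF u v])
  let ?S = "{g. gcomp Ag x g \<noteq> 0}"
  let ?T = "{g. gcomp DG u g \<noteq> 0} \<union> {g. gcomp DG v g \<noteq> 0} \<union> {g. gcomp DG (u + v) g \<noteq> 0}"
  have fT: "finite ?T" using supp_fin_D[OF u] supp_fin_D[OF v] supp_fin_D[OF uv] by simp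
  have ga: "gcomp DG (u + v) = (\<lambda>g. gcomp DG u g + gcomp DG v g)" by (rule gcomp_add[OF gsD u v])
  show "dual_op eps Ag scV Vg phi x (u + v) = dual_op eps Ag scV Vg phi x u + dual_op eps Ag scV Vg phi x v"
  proof
    fix z
    have e1: "dual_op eps Ag scV Vg phi x (u + v) z = - (\<Sum>a\<in>?S. \<Sum>c\<in>?T. eps a c * gcomp DG (u + v) c (phi (gcomp Ag x a) z))"
      by (rule dual_op_expand[OF of uv supp_fin_A fT]) auto
    have e2: "dual_op eps Ag scV Vg phi x u z = - (\<Sum>a\<in>?S. \<Sum>c\<in>?T. eps a c * gcomp DG u c (phi (gcomp Ag x a) z))"
      by (rule dual_op_expand[OF of u supp_fin_A fT]) auto
    have e3: "dual_op eps Ag scV Vg phi x v z = - (\<Sum>a\<in>?S. \<Sum>c\<in>?T. eps a c * gcomp DG v c (phi (gcomp Ag x a) z))"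
      by (rule dual_op_expand[OF of v supp_fin_A fT]) auto
    show "dual_op eps Ag scV Vg phi x (u + v) z = (dual_op eps Ag scV Vg phi x u + dual_op eps Ag scV Vg phi x v) z"
      unfolding plus_fun_apply e1 e2 e3 ga by (simp add: sum.distrib distrib_left)
  qed
next
  fix x k u assume u: "u \<in> DC"
  have ku: "dual_scale k u \<in> DC" by (rule dc_scale_mem[OF u])
  let ?S = "{g. gcomp Ag x g \<noteq> 0}"
  define T where "T = {g. gcomp DG u g \<noteq> 0} \<union> {g. gcomp DG (dual_scale k u) g \<noteq> 0}"
  have fT: "finite T" using supp_fin_D[OF u] supp_fin_D[OF ku] by (simp add: T_def)
  have ga: "gcomp DG (dual_scale k u) = (\<lambda>g. dual_scale k (gcomp DG u g))" by (rule gcomp_scale[OF gsD vs_dual u])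
  show "dual_op eps Ag scV Vg phi x (dual_scale k u) = dual_scale k (dual_op eps Ag scV Vg phi x u)"
  proof
    fix z
    have e1: "dual_op eps Ag scV Vg phi x (dual_scale k u) z = - (\<Sum>a\<in>?S. \<Sum>c\<in>T. eps a c * gcomp DG (dual_scale k u) c (phi (gcomp Ag x a) z))"
      by (rule dual_op_expand[OF of ku supp_fin_A fT]) (auto simp: T_def)
    have e2: "dual_op eps Ag scV Vg phi x u z = - (\<Sum>a\<in>?S. \<Sum>c\<in>T. eps a c * gcomp DG u c (phi (gcomp Ag x a) z))"
      by (rule dual_op_expand[OF of u supp_fin_A fT]) (auto simp: T_def)
    show "dual_op eps Ag scV Vg phi x (dual_scale k u) z = dual_scale k (dual_op eps Ag scV Vg phi x u) z"
      unfolding e1 ga by (simp add: dual_scale_def e2 sum_distrib_left mult.left_commute)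
  qed
next
  fix x y w assume w: "w \<in> DC"
  let ?S = "{g. gcomp Ag x g \<noteq> 0} \<union> {g. gcomp Ag y g \<noteq> 0} \<union> {g. gcomp Ag (x + y) g \<noteq> 0}"
  let ?T = "{g. gcomp DG w g \<noteq> 0}"
  have fS: "finite ?S" using supp_fin_A by simp
  have ga: "gcomp Ag (x + y) = (\<lambda>g. gcomp Ag x g + gcomp Ag y g)" by (rule gcomp_add[OF gsA UNIV_I UNIV_I])
  have gw: "\<And>c. gcomp DG w c \<in> DC" using gD_dc[OF w] .
  show "dual_op eps Ag scV Vg phi (x + y) w = dual_op eps Ag scV Vg phi x w + dual_op eps Ag scV Vg phi y w"
  proof
    fix z
    have e1: "dual_op eps Ag scV Vg phi (x + y) w z = - (\<Sum>a\<in>?S. \<Sum>c\<in>?T. eps a c * gcomp DG w c (phi (gcomp Ag (x + y) a) z))"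
      by (rule dual_op_expand[OF of w fS supp_fin_D[OF w]]) auto
    have e2: "dual_op eps Ag scV Vg phi x w z = - (\<Sum>a\<in>?S. \<Sum>c\<in>?T. eps a c * gcomp DG w c (phi (gcomp Ag x a) z))"
      by (rule dual_op_expand[OF of w fS supp_fin_D[OF w]]) auto
    have e3: "dual_op eps Ag scV Vg phi y w z = - (\<Sum>a\<in>?S. \<Sum>c\<in>?T. eps a c * gcomp DG w c (phi (gcomp Ag y a) z))"
      by (rule dual_op_expand[OF of w fS supp_fin_D[OF w]]) auto
    show "dual_op eps Ag scV Vg phi (x + y) w z = (dual_op eps Ag scV Vg phi x w + dual_op eps Ag scV Vg phi y w) z"
      unfolding plus_fun_apply e1 e2 e3 ga
      using of_add_x[OF of UNIV_I] dc_add[OF gw] by (simp add: sum.distrib distrib_left)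
  qed
next
  fix k x w assume w: "w \<in> DC"
  let ?S = "{g. gcomp Ag x g \<noteq> 0} \<union> {g. gcomp Ag (scA k x) g \<noteq> 0}"
  let ?T = "{g. gcomp DG w g \<noteq> 0}"
  have fS: "finite ?S" using supp_fin_A by simp
  have ga: "gcomp Ag (scA k x) = (\<lambda>g. scA k (gcomp Ag x g))" by (rule gcomp_scale[OF gsA vsA UNIV_I])
  have gw: "\<And>c. gcomp DG w c \<in> DC" using gD_dc[OF w] .
  show "dual_op eps Ag scV Vg phi (scA k x) w = dual_scale k (dual_op eps Ag scV Vg phi x w)"
  proof
    fix z
    have e1: "dual_op eps Ag scV Vg phi (scA k x) w z = - (\<Sum>a\<in>?S. \<Sum>c\<in>?T. eps a c * gcomp DG w c (phi (gcomp Ag (scA k x) a) z))"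
      by (rule dual_op_expand[OF of w fS supp_fin_D[OF w]]) auto
    have e2: "dual_op eps Ag scV Vg phi x w z = - (\<Sum>a\<in>?S. \<Sum>c\<in>?T. eps a c * gcomp DG w c (phi (gcomp Ag x a) z))"
      by (rule dual_op_expand[OF of w fS supp_fin_D[OF w]]) auto
    show "dual_op eps Ag scV Vg phi (scA k x) w z = dual_scale k (dual_op eps Ag scV Vg phi x w) z"
      unfolding e1 ga dual_scale_def e2
      using of_scale_x[OF of UNIV_I] dc_scale[OF gw] by (simp add: sum_distrib_left mult.left_commute)
  qed
next
  fix a b x w assume x: "x \<in> Ag b" and w: "w \<in> DG a"
  have wc: "w \<in> DC" by (rule dg_dc[OF w])
  show "dual_op eps Ag scV Vg phi x w \<in> DG (a + b)"
    unfolding dual_op_hom[OF of x w] dual_grading_def dual_carrier_def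
  proof (intro CollectI conjI allI impI ballI)
    fix u v show "- (eps b a * w (phi x (u + v))) = - (eps b a * w (phi x u)) + - (eps b a * w (phi x v))"
      using of_add_w[OF of UNIV_I UNIV_I] dc_add[OF wc] by (simp add: distrib_left)
  next
    fix c u show "- (eps b a * w (phi x (scV c u))) = c * - (eps b a * w (phi x u))"
      using of_scale_w[OF of UNIV_I] dc_scale[OF wc] by (simp add: mult.left_commute)
  next
    fix e v assume e: "e \<noteq> - (a + b)" and v: "v \<in> Vg e"
    have "phi x v \<in> Vg (e + b)" by (rule of_deg[OF of x v])
    moreover have "e + b \<noteq> - a" using e by (auto simp: algebra_simps)
    ultimately have "w (phi x v) = 0" using dg_van[OF w] by blast
    thus "- (eps b a * w (phi x v)) = 0" by simp
  qed
qed

end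



lemma ds_add: "dual_scale e (f + g) = dual_scale e f + dual_scale e g"
  by (simp add: dual_scale_def fun_eq_iff distrib_left)
lemma ds_diff: "dual_scale e (f - g) = dual_scale e f - dual_scale e g"
  by (simp add: dual_scale_def fun_eq_iff right_diff_distrib)
lemma ds_apply: "dual_scale e f v = e * f v"
  by (simp add: dual_scale_def)

lemma Rop_add:
  assumes p: "op_family scA Ag sc W Wg phi" and q: "op_family scA Ag sc W Wg psi"
    and vs: "vector_space sc" and u: "u \<in> W" and v: "v \<in> W"
  shows "Rop eps br sc phi psi a b x y (u + v) = Rop eps br sc phi psi a b x y u + Rop eps br sc phi psi a b x y v"
proof -
  interpret module sc using vs by (rule vs_module)
  show ?thesis unfolding Rop_def
    using of_add_w[OF p] of_add_w[OF q] of_mem[OF p] of_mem[OF q] u v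
    by (simp add: scale_right_distrib algebra_simps)
qed

lemma Sop_add:
  assumes p: "op_family scA Ag sc W Wg phi" and q: "op_family scA Ag sc W Wg psi"
    and vs: "vector_space sc" and u: "u \<in> W" and v: "v \<in> W"
  shows "Sop eps mul sc phi psi a b x y (u + v) = Sop eps mul sc phi psi a b x y u + Sop eps mul sc phi psi a b x y v"
proof -
  interpret module sc using vs by (rule vs_module)
  show ?thesis unfolding Sop_def
    using of_add_w[OF p] of_add_w[OF q] of_mem[OF p] of_mem[OF q] u v
    by (simp add: scale_right_distrib algebra_simps)
qed

locale fctx2 = fctx eps scA Ag scV Vg
  for eps :: "'g::ab_group_add \<Rightarrow> 'g \<Rightarrow> 'k::field"
    and scA :: "'k \<Rightarrow> 'a::ab_group_add \<Rightarrow> 'a" and Ag :: "'g \<Rightarrow> 'a set"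
    and scV :: "'k \<Rightarrow> 'v::ab_group_add \<Rightarrow> 'v" and Vg :: "'g \<Rightarrow> 'v set" +
  fixes mul :: "'a \<Rightarrow> 'a \<Rightarrow> 'a" and br :: "'a \<Rightarrow> 'a \<Rightarrow> 'a"
    and rho :: "'a \<Rightarrow> 'v \<Rightarrow> 'v" and mu :: "'a \<Rightarrow> 'v \<Rightarrow> 'v"
  assumes sb: "skew_bichar eps"
    and FM: "F_manifold_color eps scA Ag mul br"
    and LR: "lie_rep eps scA Ag br scV UNIV Vg rho"
    and AR: "assoc_rep scA Ag mul scV UNIV Vg mu"
    and hR: "\<And>a b c x y z v. x \<in> Ag a \<Longrightarrow> y \<in> Ag b \<Longrightarrow> z \<in> Ag c \<Longrightarrow>
          Rop eps br scV rho mu (a + b) c (mul x y) z v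
          = scV (eps a (b + c)) (Rop eps br scV rho mu b c y z (mu x v))
            + scV (eps b c) (Rop eps br scV rho mu a c x z (mu y v))"
    and hP: "\<And>a b c x y z v. x \<in> Ag a \<Longrightarrow> y \<in> Ag b \<Longrightarrow> z \<in> Ag c \<Longrightarrow>
          mu (Pop eps scA mul br a b x y z) v
          = - scV (eps a (b + c)) (Top eps mul scV rho mu b c y z (mu x v))
            + mu x (Top eps mul scV rho mu b c y z v)"
begin

abbreviation "rd \<equiv> dual_op eps Ag scV Vg rho"
abbreviation "md \<equiv> neg_op (dual_op eps Ag scV Vg mu)"

lemma e1: "eps a (b + c) = eps a b * eps a c" using sb unfolding skew_bichar_def by blast
lemma e2: "eps (a + b) c = eps a c * eps b c" using sb unfolding skew_bichar_def by blast
lemma einv: "eps a b * eps b a = 1" using sb unfolding skew_bichar_def by blast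

lemma ofR: "op_family scA Ag scV UNIV Vg rho" using LR unfolding lie_rep_def by blast
lemma ofM: "op_family scA Ag scV UNIV Vg mu" using AR unfolding assoc_rep_def by blast
lemma rho_br: "x \<in> Ag a \<Longrightarrow> y \<in> Ag b \<Longrightarrow> rho (br x y) w = rho x (rho y w) - scV (eps a b) (rho y (rho x w))"
  using LR unfolding lie_rep_def by blast
lemma mu_mul: "mu (mul x y) w = mu x (mu y w)"
  using AR unfolding assoc_rep_def by blast

lemma ca: "eps_comm_assoc eps scA Ag mul" using FM unfolding F_manifold_color_def by blast
lemma lc: "lie_color eps scA Ag br" using FM unfolding F_manifold_color_def by blast
lemma mul_deg: "x \<in> Ag a \<Longrightarrow> y \<in> Ag b \<Longrightarrow> mul x y \<in> Ag (a + b)"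
  using ca unfolding eps_comm_assoc_def graded_op_def by blast
lemma br_deg: "x \<in> Ag a \<Longrightarrow> y \<in> Ag b \<Longrightarrow> br x y \<in> Ag (a + b)"
  using lc unfolding lie_color_def graded_op_def by blast
lemma mul_comm: "x \<in> Ag a \<Longrightarrow> y \<in> Ag b \<Longrightarrow> mul x y = scA (eps a b) (mul y x)"
  using ca unfolding eps_comm_assoc_def by blast
lemma mul_addL: "mul (x + y) z = mul x z + mul y z"
  using ca unfolding eps_comm_assoc_def bilinear_op_def by blast
lemma mul_addR: "mul z (x + y) = mul z x + mul z y"
  using ca unfolding eps_comm_assoc_def bilinear_op_def by blast

lemma A_diff: "u \<in> Ag g \<Longrightarrow> v \<in> Ag g \<Longrightarrow> u - v \<in> Ag g"
proof -
  interpret module scA using vsA by (rule vs_module)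
  assume u: "u \<in> Ag g" and v: "v \<in> Ag g"
  have eq: "u - v = u + scA (-1) v" by simp
  show ?thesis unfolding eq by (rule gs_add[OF gsA u gs_scale[OF gsA v]])
qed

lemma P_deg:
  assumes x: "x \<in> Ag a" and y: "y \<in> Ag b" and z: "z \<in> Ag c"
  shows "Pop eps scA mul br a b x y z \<in> Ag (a + b + c)"
proof -
  have 1: "br x (mul y z) \<in> Ag (a + b + c)" using br_deg[OF x mul_deg[OF y z]] by (simp add: add.assoc)
  have 2: "mul (br x y) z \<in> Ag (a + b + c)" using mul_deg[OF br_deg[OF x y] z] by simp
  have 3: "scA (eps a b) (mul y (br x z)) \<in> Ag (a + b + c)"
    using gs_scale[OF gsA mul_deg[OF y br_deg[OF x z]]] by (simp add: add_ac)
  show ?thesis unfolding Pop_def by (intro A_diff 1 2 3)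
qed

lemma DG_diff: "u \<in> DG g \<Longrightarrow> v \<in> DG g \<Longrightarrow> u - v \<in> DG g"
proof -
  assume u: "u \<in> DG g" and v: "v \<in> DG g"
  have eq: "u - v = u + dual_scale (-1) v" by (simp add: fun_eq_iff dual_scale_def)
  show ?thesis unfolding eq by (rule gs_add[OF gsD u gs_scale[OF gsD v]])
qed

lemma ofR': "op_family scA Ag dual_scale DC DG rd" by (rule dual_op_family[OF ofR])
lemma ofM': "op_family scA Ag dual_scale DC DG md"
  by (rule neg_op_family[OF dual_op_family[OF ofM] gsD vs_dual])

lemma rd_hom: "x \<in> Ag a \<Longrightarrow> \<alpha> \<in> DG c \<Longrightarrow> rd x \<alpha> = (\<lambda>v. - (eps a c * \<alpha> (rho x v)))"
  by (rule dual_op_hom[OF ofR])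
lemma md_hom: "x \<in> Ag a \<Longrightarrow> \<alpha> \<in> DG c \<Longrightarrow> md x \<alpha> = (\<lambda>v. eps a c * \<alpha> (mu x v))"
  unfolding neg_op_def using dual_op_hom[OF ofM] by (simp add: fun_eq_iff)

end



context fctx2 begin

lemma dc_diff_mem: "u \<in> DC \<Longrightarrow> v \<in> DC \<Longrightarrow> u - v \<in> DC"
  unfolding dual_carrier_def by (simp add: algebra_simps)

lemma lie_dual: "lie_rep eps scA Ag br dual_scale DC DG rd"
  unfolding lie_rep_def
proof (intro conjI ofR' allI impI ballI)
  fix a b x y w assume x: "x \<in> Ag a" and y: "y \<in> Ag b" and w: "w \<in> DC"
  show "rd (br x y) w = rd x (rd y w) - dual_scale (eps a b) (rd y (rd x w))"
  proof (rule gs_ext[OF gsD, where F = "\<lambda>w. rd (br x y) w" and G = "\<lambda>w. rd x (rd y w) - dual_scale (eps a b) (rd y (rd x w))", OF _ _ _ w])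
    fix u v assume u: "u \<in> DC" and v: "v \<in> DC"
    show "rd (br x y) (u + v) = rd (br x y) u + rd (br x y) v"
      by (rule of_add_w[OF ofR' u v])
    show "rd x (rd y (u + v)) - dual_scale (eps a b) (rd y (rd x (u + v))) =
          (rd x (rd y u) - dual_scale (eps a b) (rd y (rd x u))) + (rd x (rd y v) - dual_scale (eps a b) (rd y (rd x v)))"
      using of_add_w[OF ofR'] of_mem[OF ofR'] u v by (simp add: ds_add algebra_simps)
  next
    fix c w assume w: "w \<in> DG c"
    have W: "w \<in> DC" by (rule dg_dc[OF w])
    have ryw: "rd y w \<in> DG (c + b)" by (rule of_deg[OF ofR' y w])
    have rxw: "rd x w \<in> DG (c + a)" by (rule of_deg[OF ofR' x w])
    show "rd (br x y) w = rd x (rd y w) - dual_scale (eps a b) (rd y (rd x w))"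
      unfolding rd_hom[OF br_deg[OF x y] w] rd_hom[OF x ryw] rd_hom[OF y rxw]
    proof (rule ext)
      fix v
      show "- (eps (a + b) c * w (rho (br x y) v)) =
        ((\<lambda>v. - (eps a (c + b) * rd y w (rho x v))) - dual_scale (eps a b) (\<lambda>v. - (eps b (c + a) * rd x w (rho y v)))) v"
        unfolding rd_hom[OF x w] rd_hom[OF y w] rho_br[OF x y] minus_apply ds_apply dc_diff[OF W] dc_scale[OF W] e1 e2
        using einv[of a b] by algebra
    qed
  qed
qed


lemma md_mul_hom:
  assumes x: "x \<in> Ag a" and y: "y \<in> Ag b" and w: "w \<in> DG c"
  shows "md (mul x y) w = md x (md y w)"
proof -
  have W: "w \<in> DC" by (rule dg_dc[OF w])
  have myw: "md y w \<in> DG (c + b)" by (rule of_deg[OF ofM' y w])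
  have comm: "mu (mul x y) v = scV (eps a b) (mu y (mu x v))" for v
    unfolding mul_comm[OF x y] of_scale_x[OF ofM UNIV_I] mu_mul ..
  show ?thesis
    unfolding md_hom[OF mul_deg[OF x y] w] md_hom[OF x myw]
  proof (rule ext)
    fix v
    show "eps (a + b) c * w (mu (mul x y) v) = eps a (c + b) * md y w (mu x v)"
      unfolding md_hom[OF y w] comm dc_scale[OF W] e1 e2 by (simp add: mult_ac)
  qed
qed

lemma assoc_dual: "assoc_rep scA Ag mul dual_scale DC DG md"
  unfolding assoc_rep_def
proof (intro conjI ofM' allI ballI)
  have S2: "md (mul x y) w = md x (md y w)" if x: "x \<in> Ag a" and y: "y \<in> Ag b" and w: "w \<in> DC" for x y w a b
  proof (rule gs_ext[OF gsD, where F = "\<lambda>w. md (mul x y) w" and G = "\<lambda>w. md x (md y w)", OF _ _ _ w])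
    fix u v assume u: "u \<in> DC" and v: "v \<in> DC"
    show "md (mul x y) (u + v) = md (mul x y) u + md (mul x y) v" by (rule of_add_w[OF ofM' u v])
    show "md x (md y (u + v)) = md x (md y u) + md x (md y v)"
      using of_add_w[OF ofM'] of_mem[OF ofM'] u v by simp
  next
    fix c w assume "w \<in> DG c" thus "md (mul x y) w = md x (md y w)" by (rule md_mul_hom[OF x y])
  qed
  have S3: "md (mul x y) w = md x (md y w)" if x: "x \<in> Ag a" and w: "w \<in> DC" for x y w a
  proof (rule gs_ext[OF gsA, where F = "\<lambda>y. md (mul x y) w" and G = "\<lambda>y. md x (md y w)", OF _ _ _ UNIV_I])
    fix u v :: 'a
    show "md (mul x (u + v)) w = md (mul x u) w + md (mul x v) w"
      unfolding mul_addR by (rule of_add_x[OF ofM' w])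
    show "md x (md (u + v) w) = md x (md u w) + md x (md v w)"
      unfolding of_add_x[OF ofM' w] using of_add_w[OF ofM'] of_mem[OF ofM'] w by simp
  next
    fix c y assume "y \<in> Ag c" thus "md (mul x y) w = md x (md y w)" by (rule S2[OF x _ w])
  qed
  fix x y w assume w: "w \<in> DC"
  show "md (mul x y) w = md x (md y w)"
  proof (rule gs_ext[OF gsA, where F = "\<lambda>x. md (mul x y) w" and G = "\<lambda>x. md x (md y w)", OF _ _ _ UNIV_I])
    fix u v :: 'a
    show "md (mul (u + v) y) w = md (mul u y) w + md (mul v y) w"
      unfolding mul_addL by (rule of_add_x[OF ofM' w])
    show "md (u + v) (md y w) = md u (md y w) + md v (md y w)"
      by (rule of_add_x[OF ofM' of_mem[OF ofM' w]])
  next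
    fix c x assume "x \<in> Ag c" thus "md (mul x y) w = md x (md y w)" by (rule S3[OF _ w])
  qed
qed

abbreviation "Rd \<equiv> Rop eps br dual_scale rd md"
abbreviation "Sd \<equiv> Sop eps mul dual_scale rd md"

lemma R_hom:
  assumes x: "x \<in> Ag a" and y: "y \<in> Ag b" and al: "\<alpha> \<in> DG d"
  shows "Rd a b x y \<alpha> = (\<lambda>v. eps (a + b) d * \<alpha> (Rop eps br scV rho mu a b x y v))"
proof -
  have W: "\<alpha> \<in> DC" by (rule dg_dc[OF al])
  have m1: "md y \<alpha> \<in> DG (d + b)" by (rule of_deg[OF ofM' y al])
  have m2: "rd x \<alpha> \<in> DG (d + a)" by (rule of_deg[OF ofR' x al])
  show ?thesis
    unfolding Rop_def[of eps br dual_scale rd md] rd_hom[OF x m1] md_hom[OF y m2] md_hom[OF br_deg[OF x y] al]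
  proof (rule ext)
    fix v
    show "((\<lambda>v. - (eps a (d + b) * md y \<alpha> (rho x v))) - dual_scale (eps a b) (\<lambda>v. eps b (d + a) * rd x \<alpha> (mu y v)) -
          (\<lambda>v. eps (a + b) d * \<alpha> (mu (br x y) v))) v =
         eps (a + b) d * \<alpha> (Rop eps br scV rho mu a b x y v)"
      unfolding md_hom[OF y al] rd_hom[OF x al] Rop_def minus_apply ds_apply dc_diff[OF W] dc_scale[OF W] e1 e2
      using einv[of a b] by algebra
  qed
qed

lemma R_deg:
  assumes x: "x \<in> Ag a" and y: "y \<in> Ag b" and al: "\<alpha> \<in> DG d"
  shows "Rd a b x y \<alpha> \<in> DG (d + (a + b))"
proof -
  have 1: "rd x (md y \<alpha>) \<in> DG (d + (a + b))"
    using of_deg[OF ofR' x of_deg[OF ofM' y al]] by (simp add: add_ac)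
  have 2: "dual_scale (eps a b) (md y (rd x \<alpha>)) \<in> DG (d + (a + b))"
    using gs_scale[OF gsD of_deg[OF ofM' y of_deg[OF ofR' x al]]] by (simp add: add_ac)
  have 3: "md (br x y) \<alpha> \<in> DG (d + (a + b))"
    using of_deg[OF ofM' br_deg[OF x y] al] .
  show ?thesis unfolding Rop_def by (intro DG_diff 1 2 3)
qed

lemma R_mem: "u \<in> DC \<Longrightarrow> Rd a b x y u \<in> DC"
  unfolding Rop_def
  by (intro dc_diff_mem of_mem[OF ofR'] of_mem[OF ofM'] dc_scale_mem)

lemma R_add: "u \<in> DC \<Longrightarrow> v \<in> DC \<Longrightarrow> Rd a b x y (u + v) = Rd a b x y u + Rd a b x y v"
  by (rule Rop_add[OF ofR' ofM' vs_dual])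

lemma R_cond:
  assumes x1: "x1 \<in> Ag a1" and x2: "x2 \<in> Ag a2" and x3: "x3 \<in> Ag a3" and w: "w \<in> DC"
  shows "Rd (a1 + a2) a3 (mul x1 x2) x3 w
        = md x1 (Rd a2 a3 x2 x3 w) + dual_scale (eps a1 a2) (md x2 (Rd a1 a3 x1 x3 w))"
proof (rule gs_ext[OF gsD, where F = "\<lambda>w. Rd (a1 + a2) a3 (mul x1 x2) x3 w"
      and G = "\<lambda>w. md x1 (Rd a2 a3 x2 x3 w) + dual_scale (eps a1 a2) (md x2 (Rd a1 a3 x1 x3 w))", OF _ _ _ w])
  fix u v assume u: "u \<in> DC" and v: "v \<in> DC"
  show "Rd (a1 + a2) a3 (mul x1 x2) x3 (u + v) = Rd (a1 + a2) a3 (mul x1 x2) x3 u + Rd (a1 + a2) a3 (mul x1 x2) x3 v"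
    by (rule R_add[OF u v])
  show "md x1 (Rd a2 a3 x2 x3 (u + v)) + dual_scale (eps a1 a2) (md x2 (Rd a1 a3 x1 x3 (u + v))) =
        (md x1 (Rd a2 a3 x2 x3 u) + dual_scale (eps a1 a2) (md x2 (Rd a1 a3 x1 x3 u))) +
        (md x1 (Rd a2 a3 x2 x3 v) + dual_scale (eps a1 a2) (md x2 (Rd a1 a3 x1 x3 v)))"
    unfolding R_add[OF u v] of_add_w[OF ofM' R_mem[OF u] R_mem[OF v]] ds_add by (simp add: algebra_simps)
next
  fix d w assume al: "w \<in> DG d"
  have W: "w \<in> DC" by (rule dg_dc[OF al])
  show "Rd (a1 + a2) a3 (mul x1 x2) x3 w = md x1 (Rd a2 a3 x2 x3 w) + dual_scale (eps a1 a2) (md x2 (Rd a1 a3 x1 x3 w))"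
    unfolding R_hom[OF mul_deg[OF x1 x2] x3 al] md_hom[OF x1 R_deg[OF x2 x3 al]] md_hom[OF x2 R_deg[OF x1 x3 al]]
  proof (rule ext)
    fix v
    show "eps (a1 + a2 + a3) d * w (Rop eps br scV rho mu (a1 + a2) a3 (mul x1 x2) x3 v) =
         ((\<lambda>v. eps a1 (d + (a2 + a3)) * Rd a2 a3 x2 x3 w (mu x1 v)) +
          dual_scale (eps a1 a2) (\<lambda>v. eps a2 (d + (a1 + a3)) * Rd a1 a3 x1 x3 w (mu x2 v))) v"
      unfolding R_hom[OF x2 x3 al] R_hom[OF x1 x3 al] hR[OF x1 x2 x3] plus_fun_apply ds_apply
        dc_add[OF W] dc_scale[OF W] e1 e2
      using einv[of a1 a2] einv[of a1 a3] einv[of a2 a3] by algebra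
  qed
qed

lemma S_hom:
  assumes x: "x \<in> Ag a" and y: "y \<in> Ag b" and al: "\<alpha> \<in> DG d"
  shows "Sd a b x y \<alpha> = (\<lambda>v. eps (a + b) d * \<alpha> (Top eps mul scV rho mu a b x y v))"
proof -
  have W: "\<alpha> \<in> DC" by (rule dg_dc[OF al])
  have m1: "rd y \<alpha> \<in> DG (d + b)" by (rule of_deg[OF ofR' y al])
  have m2: "rd x \<alpha> \<in> DG (d + a)" by (rule of_deg[OF ofR' x al])
  show ?thesis
    unfolding Sop_def[of eps mul dual_scale rd md] md_hom[OF x m1] md_hom[OF y m2] rd_hom[OF mul_deg[OF x y] al]
  proof (rule ext)
    fix v
    show "((\<lambda>v. eps a (d + b) * rd y \<alpha> (mu x v)) + dual_scale (eps a b) (\<lambda>v. eps b (d + a) * rd x \<alpha> (mu y v)) -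
          (\<lambda>v. - (eps (a + b) d * \<alpha> (rho (mul x y) v)))) v =
         eps (a + b) d * \<alpha> (Top eps mul scV rho mu a b x y v)"
      unfolding rd_hom[OF y al] rd_hom[OF x al] Top_def minus_apply plus_fun_apply ds_apply
        dc_diff[OF W] dc_add[OF W] dc_minus[OF W] dc_scale[OF W] e1 e2
      using einv[of a b] by algebra
  qed
qed

lemma S_deg:
  assumes x: "x \<in> Ag a" and y: "y \<in> Ag b" and al: "\<alpha> \<in> DG d"
  shows "Sd a b x y \<alpha> \<in> DG (d + (a + b))"
proof -
  have 1: "md x (rd y \<alpha>) \<in> DG (d + (a + b))"
    using of_deg[OF ofM' x of_deg[OF ofR' y al]] by (simp add: add_ac)
  have 2: "dual_scale (eps a b) (md y (rd x \<alpha>)) \<in> DG (d + (a + b))"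
    using gs_scale[OF gsD of_deg[OF ofM' y of_deg[OF ofR' x al]]] by (simp add: add_ac)
  have 3: "rd (mul x y) \<alpha> \<in> DG (d + (a + b))"
    using of_deg[OF ofR' mul_deg[OF x y] al] .
  show ?thesis unfolding Sop_def by (intro DG_diff gs_add[OF gsD] 1 2 3)
qed

lemma S_mem: "u \<in> DC \<Longrightarrow> Sd a b x y u \<in> DC"
  unfolding Sop_def
  by (intro dc_diff_mem dc_add_mem of_mem[OF ofR'] of_mem[OF ofM'] dc_scale_mem)

lemma S_add: "u \<in> DC \<Longrightarrow> v \<in> DC \<Longrightarrow> Sd a b x y (u + v) = Sd a b x y u + Sd a b x y v"
  by (rule Sop_add[OF ofR' ofM' vs_dual])

lemma S_cond:
  assumes x1: "x1 \<in> Ag a1" and x2: "x2 \<in> Ag a2" and x3: "x3 \<in> Ag a3" and w: "w \<in> DC"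
  shows "md (Pop eps scA mul br a1 a2 x1 x2 x3) w
        = dual_scale (eps a1 (a2 + a3)) (Sd a2 a3 x2 x3 (md x1 w)) - md x1 (Sd a2 a3 x2 x3 w)"
proof (rule gs_ext[OF gsD, where F = "\<lambda>w. md (Pop eps scA mul br a1 a2 x1 x2 x3) w"
      and G = "\<lambda>w. dual_scale (eps a1 (a2 + a3)) (Sd a2 a3 x2 x3 (md x1 w)) - md x1 (Sd a2 a3 x2 x3 w)", OF _ _ _ w])
  fix u v assume u: "u \<in> DC" and v: "v \<in> DC"
  show "md (Pop eps scA mul br a1 a2 x1 x2 x3) (u + v) = md (Pop eps scA mul br a1 a2 x1 x2 x3) u + md (Pop eps scA mul br a1 a2 x1 x2 x3) v"
    by (rule of_add_w[OF ofM' u v])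
  show "dual_scale (eps a1 (a2 + a3)) (Sd a2 a3 x2 x3 (md x1 (u + v))) - md x1 (Sd a2 a3 x2 x3 (u + v)) =
        (dual_scale (eps a1 (a2 + a3)) (Sd a2 a3 x2 x3 (md x1 u)) - md x1 (Sd a2 a3 x2 x3 u)) +
        (dual_scale (eps a1 (a2 + a3)) (Sd a2 a3 x2 x3 (md x1 v)) - md x1 (Sd a2 a3 x2 x3 v))"
    unfolding of_add_w[OF ofM' u v] S_add[OF of_mem[OF ofM' u] of_mem[OF ofM' v]] S_add[OF u v]
      of_add_w[OF ofM' S_mem[OF u] S_mem[OF v]] ds_add by (simp add: algebra_simps)
next
  fix d w assume al: "w \<in> DG d"
  have W: "w \<in> DC" by (rule dg_dc[OF al])
  have mw: "md x1 w \<in> DG (d + a1)" by (rule of_deg[OF ofM' x1 al])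
  show "md (Pop eps scA mul br a1 a2 x1 x2 x3) w = dual_scale (eps a1 (a2 + a3)) (Sd a2 a3 x2 x3 (md x1 w)) - md x1 (Sd a2 a3 x2 x3 w)"
    unfolding md_hom[OF P_deg[OF x1 x2 x3] al] S_hom[OF x2 x3 mw] md_hom[OF x1 S_deg[OF x2 x3 al]]
  proof (rule ext)
    fix v
    show "eps (a1 + a2 + a3) d * w (mu (Pop eps scA mul br a1 a2 x1 x2 x3) v) =
         (dual_scale (eps a1 (a2 + a3)) (\<lambda>v. eps (a2 + a3) (d + a1) * md x1 w (Top eps mul scV rho mu a2 a3 x2 x3 v)) -
          (\<lambda>v. eps a1 (d + (a2 + a3)) * Sd a2 a3 x2 x3 w (mu x1 v))) v"
      unfolding md_hom[OF x1 al] S_hom[OF x2 x3 al] hP[OF x1 x2 x3] minus_apply ds_apply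
        dc_add[OF W] dc_minus[OF W] dc_scale[OF W] e1 e2
      using einv[of a1 a2] einv[of a1 a3] einv[of a2 a3] by algebra
  qed
qed

lemma main: "graded_space dual_scale DC DG \<and> F_manifold_rep eps scA Ag mul br dual_scale DC DG rd md"
  unfolding F_manifold_rep_def
  using gsD lie_dual assoc_dual R_cond S_cond by blast

end



theorem proposition3p6:
  fixes eps :: "'g::ab_group_add \<Rightarrow> 'g \<Rightarrow> 'k::field_char_0"
    and scA :: "'k \<Rightarrow> 'a::ab_group_add \<Rightarrow> 'a" and Ag :: "'g \<Rightarrow> 'a set"
    and mul :: "'a \<Rightarrow> 'a \<Rightarrow> 'a" and br :: "'a \<Rightarrow> 'a \<Rightarrow> 'a"
    and scV :: "'k \<Rightarrow> 'v::ab_group_add \<Rightarrow> 'v" and Vg :: "'g \<Rightarrow> 'v set"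
    and rho :: "'a \<Rightarrow> 'v \<Rightarrow> 'v" and mu :: "'a \<Rightarrow> 'v \<Rightarrow> 'v"
  assumes "alg_closed_field TYPE('k)"
    and "skew_bichar eps"
    and "vector_space scA" and "fin_dim scA" and "graded_space scA UNIV Ag"
    and "vector_space scV" and "fin_dim scV" and "graded_space scV UNIV Vg"
    and "F_manifold_color eps scA Ag mul br"
    and "lie_rep eps scA Ag br scV UNIV Vg rho"
    and "assoc_rep scA Ag mul scV UNIV Vg mu"
    and "\<And>a b c x y z v. x \<in> Ag a \<Longrightarrow> y \<in> Ag b \<Longrightarrow> z \<in> Ag c \<Longrightarrow>
          Rop eps br scV rho mu (a + b) c (mul x y) z v
          = scV (eps a (b + c)) (Rop eps br scV rho mu b c y z (mu x v))
            + scV (eps b c) (Rop eps br scV rho mu a c x z (mu y v))"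
    and "\<And>a b c x y z v. x \<in> Ag a \<Longrightarrow> y \<in> Ag b \<Longrightarrow> z \<in> Ag c \<Longrightarrow>
          mu (Pop eps scA mul br a b x y z) v
          = - scV (eps a (b + c)) (Top eps mul scV rho mu b c y z (mu x v))
            + mu x (Top eps mul scV rho mu b c y z v)"
  shows "graded_space dual_scale (dual_carrier scV) (dual_grading scV Vg) \<and>
         F_manifold_rep eps scA Ag mul br dual_scale (dual_carrier scV) (dual_grading scV Vg)
           (dual_op eps Ag scV Vg rho) (neg_op (dual_op eps Ag scV Vg mu))"
proof -
  interpret fctx2 eps scA Ag scV Vg mul br rho mu
    by (intro fctx2.intro fctx.intro fctx2_axioms.intro; rule assms)
  show ?thesis by (rule main)
qed

end
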